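(* Let $n_1,n_2\ge1$ be integers and let $X\sim\mathrm{Bino}(n_1,p_1)$ and $Y\sim\mathrm{Bino}(n_2,p_2)$ be independent, with parameter of interest $d=p_1-p_2\in[-1,1]$. Fix $\alpha\in[0,1]$. Let $S_d=\{0,\dots,n_1\}\times\{0,\dots,n_2\}$ and for $d_0\in[-1,1]$ let $D(d_0)=[0,1-d_0]$ if $d_0\in[0,1]$ and $D(d_0)=[-d_0,1]$ if $d_0\in[-1,0)$. Let $T_d:S_d\times[-1,1]\to\mathbb{R}$ be a test statistic satisfying $$T_d(x,y,d_0)=T_d(n_1-x,n_2-y,-d_0)\quad\text{for all }(x,y)\in S_d,\ d_0\in[-1,1].$$ Define $$h_d(x,y,d_0)=\sup_{p_2\in D(d_0)}\ \sum_{\{(u,v)\in S_d:\,T_d(u,v,d_0)\le T_d(x,y,d_0)\}} p_B(u,n_1,p_2+d_0)\,p_B(v,n_2,p_2),$$ and $C_d(x,y)=\overline{\{d_0\in[-1,1]: h_d(x,y,d_0)>\alpha\}}$, written $C_d(x,y)=[L_d(x,y),U_d(x,y)]$. Then $$U_d(x,y)=-L_d(n_1-x,n_2-y)\quad\text{for all }(x,y)\in S_d.$$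
   Context: $p_B(y,n,p)=\binom{n}{y}p^y(1-p)^{n-y}$ denotes the binomial probability mass function. For a set $A\subseteq\mathbb{R}$, $\overline{A}$ denotes the smallest closed simply connected set (i.e. closed interval) containing $A$. A small value of $T_d$ is regarded as evidence against $H_0:d=d_0$. *)

theory Defs
  imports "HOL-Analysis.Analysis"
begin

definition pB :: "nat \<Rightarrow> nat \<Rightarrow> real \<Rightarrow> real" where
  "pB y n p = real (n choose y) * p ^ y * (1 - p) ^ (n - y)"

definition Sd :: "nat \<Rightarrow> nat \<Rightarrow> (nat \<times> nat) set" where
  "Sd n1 n2 = {0..n1} \<times> {0..n2}"

definition Dset :: "real \<Rightarrow> real set" where
  "Dset d0 = (if 0 \<le> d0 then {0..1 - d0} else {-d0..1})"

definition hd :: "(nat \<Rightarrow> nat \<Rightarrow> real \<Rightarrow> real) \<Rightarrow> nat \<Rightarrow> nat \<Rightarrow> nat \<Rightarrow> nat \<Rightarrow> real \<Rightarrow> real" where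
  "hd T n1 n2 x y d0 =
     (SUP p2\<in>Dset d0. \<Sum>(u,v)\<in>{(u,v)\<in>Sd n1 n2. T u v d0 \<le> T x y d0}.
         pB u n1 (p2 + d0) * pB v n2 p2)"

definition Cd :: "real \<Rightarrow> (nat \<Rightarrow> nat \<Rightarrow> real \<Rightarrow> real) \<Rightarrow> nat \<Rightarrow> nat \<Rightarrow> nat \<Rightarrow> nat \<Rightarrow> real set" where
  "Cd \<alpha> T n1 n2 x y = closure (convex hull {d0 \<in> {-1..1}. hd T n1 n2 x y d0 > \<alpha>})"

definition Ld :: "real \<Rightarrow> (nat \<Rightarrow> nat \<Rightarrow> real \<Rightarrow> real) \<Rightarrow> nat \<Rightarrow> nat \<Rightarrow> nat \<Rightarrow> nat \<Rightarrow> real" where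
  "Ld \<alpha> T n1 n2 x y = Inf (Cd \<alpha> T n1 n2 x y)"

definition Ud :: "real \<Rightarrow> (nat \<Rightarrow> nat \<Rightarrow> real \<Rightarrow> real) \<Rightarrow> nat \<Rightarrow> nat \<Rightarrow> nat \<Rightarrow> nat \<Rightarrow> real" where
  "Ud \<alpha> T n1 n2 x y = Sup (Cd \<alpha> T n1 n2 x y)"

end

theory Submission
  imports Defs
begin

lemma pB_flip: "u \<le> n \<Longrightarrow> pB (n - u) n r = pB u n (1 - r)"
  unfolding pB_def by (simp add: binomial_symmetric[symmetric] mult.commute mult.left_commute)

lemma Dset_flip: "(\<lambda>q. 1 - q) ` Dset (- d0) = Dset d0"
proof -
  have "(\<lambda>q::real. 1 - q) ` {a..b} = {1-b..1-a}" for a b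
    by (auto simp: image_iff intro!: bexI[where x="1 - _"])
  then show ?thesis unfolding Dset_def by auto
qed

lemma hd_sym:
  fixes T :: "nat \<Rightarrow> nat \<Rightarrow> real \<Rightarrow> real"
  assumes symT: "\<And>x y d0. (x, y) \<in> Sd n1 n2 \<Longrightarrow> d0 \<in> {-1..1} \<Longrightarrow>
                 T x y d0 = T (n1 - x) (n2 - y) (- d0)"
    and xy: "(x, y) \<in> Sd n1 n2" and d0: "d0 \<in> {-1..1}"
  shows "hd T n1 n2 (n1 - x) (n2 - y) (- d0) = hd T n1 n2 x y d0"
proof -
  define A where "A = {(u,v)\<in>Sd n1 n2. T u v d0 \<le> T x y d0}"
  define B where "B = {(u,v)\<in>Sd n1 n2. T u v (-d0) \<le> T (n1 - x) (n2 - y) (-d0)}"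
  define g where "g = (\<lambda>(u::nat,v::nat). (n1 - u, n2 - v))"
  have bij: "bij_betw g A B"
  proof (rule bij_betw_byWitness[where f'=g])
    show "\<forall>a\<in>A. g (g a) = a" unfolding A_def g_def Sd_def by auto
    show "\<forall>a\<in>B. g (g a) = a" unfolding B_def g_def Sd_def by auto
    show "g ` A \<subseteq> B"
    proof
      fix w assume "w \<in> g ` A"
      then obtain u v where uv: "(u,v) \<in> A" "w = (n1-u, n2-v)" unfolding g_def by auto
      have "T (n1-u) (n2-v) (-d0) = T u v d0" using symT[of u v d0] uv d0 unfolding A_def by auto
      moreover have "T (n1-x) (n2-y) (-d0) = T x y d0" using symT[OF xy d0] by simp
      ultimately show "w \<in> B" using uv unfolding A_def B_def Sd_def by auto
    qed
    show "g ` B \<subseteq> A"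
    proof
      fix w assume "w \<in> g ` B"
      then obtain u v where uv: "(u,v) \<in> B" "w = (n1-u, n2-v)" unfolding g_def by auto
      have "(n1-u, n2-v) \<in> Sd n1 n2" using uv unfolding B_def Sd_def by auto
      from symT[OF this d0] uv have "T (n1-u) (n2-v) d0 = T u v (-d0)" unfolding B_def Sd_def by auto
      moreover have "T (n1-x) (n2-y) (-d0) = T x y d0" using symT[OF xy d0] by simp
      ultimately show "w \<in> A" using uv unfolding A_def B_def Sd_def by auto
    qed
  qed
  have sumeq: "(\<Sum>(u,v)\<in>B. pB u n1 (q + - d0) * pB v n2 q)
      = (\<Sum>(u,v)\<in>A. pB u n1 ((1 - q) + d0) * pB v n2 (1 - q))" for q
  proof -
    have "(\<Sum>(u,v)\<in>B. pB u n1 (q + - d0) * pB v n2 q)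
        = (\<Sum>w\<in>A. (\<lambda>(u,v). pB u n1 (q + - d0) * pB v n2 q) (g w))"
      using sum.reindex_bij_betw[OF bij, symmetric] by blast
    also have "\<dots> = (\<Sum>(u,v)\<in>A. pB u n1 ((1 - q) + d0) * pB v n2 (1 - q))"
    proof (rule sum.cong[OF refl])
      fix w assume "w \<in> A"
      then obtain u v where "w = (u,v)" "u \<le> n1" "v \<le> n2" unfolding A_def Sd_def by auto
      then show "(\<lambda>(u,v). pB u n1 (q + - d0) * pB v n2 q) (g w)
          = (\<lambda>(u,v). pB u n1 ((1 - q) + d0) * pB v n2 (1 - q)) w"
        using pB_flip[of u n1 "q + - d0"] pB_flip[of v n2 q] unfolding g_def by (simp add: algebra_simps)
    qed
    finally show ?thesis .
  qed
  have "hd T n1 n2 (n1 - x) (n2 - y) (- d0)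
      = (SUP q\<in>Dset (-d0). \<Sum>(u,v)\<in>A. pB u n1 ((1 - q) + d0) * pB v n2 (1 - q))"
    unfolding hd_def B_def[symmetric] using sumeq by simp
  also have "\<dots> = (SUP p\<in>(\<lambda>q. 1 - q) ` Dset (-d0). \<Sum>(u,v)\<in>A. pB u n1 (p + d0) * pB v n2 p)"
    by (simp add: image_image)
  also have "\<dots> = hd T n1 n2 x y d0"
    unfolding Dset_flip hd_def A_def by simp
  finally show ?thesis .
qed

theorem proposition2:
  fixes n1 n2 :: nat and \<alpha> :: real and T :: "nat \<Rightarrow> nat \<Rightarrow> real \<Rightarrow> real"
  assumes "n1 \<ge> 1" and "n2 \<ge> 1"
    and "0 \<le> \<alpha>" and "\<alpha> \<le> 1"
    and symT: "\<And>x y d0. (x, y) \<in> Sd n1 n2 \<Longrightarrow> d0 \<in> {-1..1} \<Longrightarrow>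
                 T x y d0 = T (n1 - x) (n2 - y) (- d0)"
  shows "\<forall>(x, y) \<in> Sd n1 n2. Ud \<alpha> T n1 n2 x y = - Ld \<alpha> T n1 n2 (n1 - x) (n2 - y)"
proof (clarify)
  fix x y assume xy: "(x, y) \<in> Sd n1 n2"
  define S where "S = {d0 \<in> {-1..1::real}. hd T n1 n2 (n1 - x) (n2 - y) d0 > \<alpha>}"
  have set: "{d0 \<in> {-1..1}. hd T n1 n2 x y d0 > \<alpha>} = uminus ` S"
  proof (rule set_eqI)
    fix d show "d \<in> {d0 \<in> {-1..1}. hd T n1 n2 x y d0 > \<alpha>} \<longleftrightarrow> d \<in> uminus ` S"
    proof
      assume a: "d \<in> {d0 \<in> {-1..1}. hd T n1 n2 x y d0 > \<alpha>}"
      then have "-d \<in> S" using hd_sym[where T=T and ?n1.0=n1 and ?n2.0=n2, OF symT xy, of d]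
        unfolding S_def by auto
      then show "d \<in> uminus ` S" by (metis image_eqI minus_minus)
    next
      assume "d \<in> uminus ` S"
      then obtain e where e: "e \<in> S" "d = -e" by auto
      then have "d \<in> {-1..1}" unfolding S_def by auto
      then show "d \<in> {d0 \<in> {-1..1}. hd T n1 n2 x y d0 > \<alpha>}"
        using e hd_sym[where T=T and ?n1.0=n1 and ?n2.0=n2, OF symT xy, of d] unfolding S_def by auto
    qed
  qed
  have lin: "linear (uminus :: real \<Rightarrow> real)" by (rule linear_uminus)
  have "Cd \<alpha> T n1 n2 x y = uminus ` Cd \<alpha> T n1 n2 (n1 - x) (n2 - y)"
    unfolding Cd_def set S_def[symmetric]
    by (simp add: convex_hull_linear_image[OF lin, symmetric]
        closure_injective_linear_image[OF lin] inj_def)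
  then show "Ud \<alpha> T n1 n2 x y = - Ld \<alpha> T n1 n2 (n1 - x) (n2 - y)"
    unfolding Ud_def Ld_def Inf_real_def by simp
qed

end
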